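(* Let $k, r, a, b, m, n$ be integers satisfying $$k\geq 1,\quad 0\leq a\leq m,\quad \max\{0,\tfrac{a}{k}-r\}\leq b\leq n,\quad n\geq \tfrac{m}{k}-r.$$ Let $L_{\frac1k,r}(a,b;m,n)$ be the set of lattice paths from $(a,b)$ to $(m,n)$ with unit steps $(1,0)$ and $(0,1)$ that stay weakly above the line $y=\frac{x}{k}-r$. Then $$|L_{\frac1k,r}(a,b;m,n)|=\sum_{i=0}^{\lfloor\frac{k(n+r)-m}{k+1}\rfloor}(-1)^i\,\frac{k(b+r)-a+1}{k(n+r-i)-a+1}\binom{(k+1)(n-i)-a-b+kr}{n-b-i}\binom{k(n+r-i)-m}{i}.$$
   Context: A path stays weakly above the line $y=\frac{x}{k}-r$ if every lattice point $(x,y)$ on it satisfies $y\geq \frac{x}{k}-r$. $\lfloor x\rfloor$ is the floor function. Binomial coefficients $\binom{N}{j}$ with $N\ge0$ equal $0$ when $j<0$ or $j>N$. *)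

theory Defs
  imports Complex_Main
begin

fun lp_step :: "int \<times> int \<Rightarrow> bool \<Rightarrow> int \<times> int" where
  "lp_step (x, y) True = (x + 1, y)"
| "lp_step (x, y) False = (x, y + 1)"

fun lp_points :: "int \<times> int \<Rightarrow> bool list \<Rightarrow> (int \<times> int) list" where
  "lp_points p [] = [p]"
| "lp_points p (s # ss) = p # lp_points (lp_step p s) ss"

definition lattice_paths_above ::
  "int \<Rightarrow> int \<Rightarrow> int \<Rightarrow> int \<Rightarrow> int \<Rightarrow> int \<Rightarrow> bool list set" where
  "lattice_paths_above k r a b m n =
     {ss. last (lp_points (a, b) ss) = (m, n) \<and>
          (\<forall>(x, y) \<in> set (lp_points (a, b) ss). real_of_int y \<ge> real_of_int x / real_of_int k - real_of_int r)}"

text \<open>Binomial coefficient with integer arguments: N choose j for N \<ge> 0, 0 if j < 0 or j > N.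
  (Negative N never arises in the statement.)\<close>
definition binom_int :: "int \<Rightarrow> int \<Rightarrow> real" where
  "binom_int N j = (if 0 \<le> N \<and> 0 \<le> j then real (nat N choose nat j) else 0)"

end

theory Submission
  imports Defs
begin


lemma choose_step: "Suc j * (N choose Suc j) = (N - j) * (N choose j)"
  using binomial_absorption[of j N] binomial_absorb_comp[of N j] by simp

fun Pb :: "nat \<Rightarrow> nat \<Rightarrow> nat \<Rightarrow> real" where
  "Pb K c 0 = 1"
| "Pb K c (Suc j) = real ((c + (K+1)*Suc j) choose Suc j) - real K * real ((c + (K+1)*Suc j) choose j)"

lemma Pb_pascal: "Pb K (Suc c) (Suc j) = Pb K c (Suc j) + Pb K (c+K+1) j"
proof (cases j)
  case 0
  then show ?thesis by (simp add: algebra_simps)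
next
  case (Suc j')
  define N where "N = c + (K+1)*Suc j"
  have e1: "Suc c + (K+1)*Suc j = Suc N" by (simp add: N_def)
  have e2: "c + K + 1 + (K+1)*Suc j' = N" by (simp add: N_def Suc algebra_simps)
  have "Pb K (Suc c) (Suc j) = real (Suc N choose Suc j) - real K * real (Suc N choose j)"
    by (simp only: Pb.simps e1)
  also have "\<dots> = real (N choose j) + real (N choose Suc j) - real K * (real (N choose j') + real (N choose j))"
    by (simp add: Suc)
  also have "\<dots> = Pb K c (Suc j) + Pb K (c+K+1) j"
  proof -
    have p1: "Pb K c (Suc j) = real (N choose Suc j) - real K * real (N choose j)"
      by (simp only: Pb.simps N_def)
    have p2: "Pb K (c+K+1) j = real (N choose j) - real K * real (N choose j')"
      by (simp only: Suc Pb.simps e2)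
    show ?thesis unfolding p1 p2 by (simp add: algebra_simps)
  qed
  finally show ?thesis .
qed

lemma Pb_zero: "Pb K 0 (Suc j) = Pb K K j"
proof (cases j)
  case 0
  then show ?thesis by simp
next
  case (Suc j')
  define M where "M = K + (K+1)*j"
  have e1: "0 + (K+1)*Suc j = Suc M" by (simp add: M_def)
  have e2: "K + (K+1)*Suc j' = M" by (simp add: M_def Suc)
  have key: "(M choose Suc j) = K * (M choose j)"
  proof -
    have "Suc j * (M choose Suc j) = (M - j) * (M choose j)" by (rule choose_step)
    also have "M - j = K * Suc j" by (simp add: M_def algebra_simps)
    finally have "Suc j * (M choose Suc j) = Suc j * (K * (M choose j))" by (simp add: algebra_simps)
    then show ?thesis by (metis mult_left_cancel nat.simps(3))
  qed
  have "Pb K 0 (Suc j) = real (Suc M choose Suc j) - real K * real (Suc M choose j)"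
    by (simp only: Pb.simps e1)
  also have "\<dots> = real (M choose j) + real (M choose Suc j) - real K * (real (M choose j') + real (M choose j))"
    by (simp add: Suc)
  also have "\<dots> = Pb K K j"
  proof -
    have p2: "Pb K K j = real (M choose j) - real K * real (M choose j')"
      by (simp only: Suc Pb.simps e2)
    show ?thesis unfolding p2 key by (simp add: algebra_simps)
  qed
  finally show ?thesis .
qed

lemma Pb_closed: "Pb K c j = (real c + 1) / (real c + real K * real j + 1) * real ((c + (K+1)*j) choose j)"
proof (cases j)
  case 0
  then show ?thesis by simp
next
  case (Suc j')
  define N where "N = c + (K+1)*j"
  have "Suc j' * (N choose Suc j') = (N - j') * (N choose j')" by (rule choose_step)
  moreover have "N - j' = c + K*j + 1" by (simp add: N_def Suc algebra_simps)
  ultimately have h: "real (N choose j') = real j * real (N choose j) / (real c + real K * real j + 1)"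
    unfolding Suc
    by (metis (no_types, lifting) Suc_eq_plus1 add.commute nonzero_mult_div_cancel_left of_nat_Suc of_nat_add of_nat_mult add_pos_nonneg of_nat_0_le_iff zero_less_one not_less_iff_gr_or_eq)
  have "Pb K c j = real (N choose j) - real K * real (N choose j')"
    by (simp add: Suc N_def)
  also have "\<dots> = (real c + 1) / (real c + real K * real j + 1) * real (N choose j)"
  proof -
    have "0 \<le> real c + real K * real j" by simp
    then have nz: "real c + real K * real j + 1 \<noteq> 0" by linarith
    show ?thesis unfolding h using nz by (simp add: field_simps)
  qed
  finally show ?thesis by (simp add: N_def)
qed




declare Pb.simps(2)[simp del]


definition Wf :: "nat \<Rightarrow> nat \<Rightarrow> nat \<Rightarrow> int \<Rightarrow> real" where
  "Wf K c d u = (\<Sum>j\<in>{0..d}. (-1)^(d-j) * Pb K c j * binom_int (int c + int K * int j - u) (int (d-j)))"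

lemma Wf_d0: "u \<le> int c \<Longrightarrow> Wf K c 0 u = 1"
  by (simp add: Wf_def binom_int_def)

lemma Wf_rec: "Wf K (Suc c) (Suc d) u = Wf K c (Suc d) (u-1) + Wf K (c+K+1) d u"
proof -
  have a: "Wf K (Suc c) (Suc d) u = (-1)^(Suc d) * binom_int (int (Suc c) - u) (int (Suc d)) +
     (\<Sum>j\<in>{0..d}. (-1)^(d-j) * (Pb K c (Suc j) + Pb K (c+K+1) j) * binom_int (int (Suc c) + int K * int (Suc j) - u) (int (d-j)))"
    unfolding Wf_def sum.atLeast0_atMost_Suc_shift by (simp add: Pb_pascal)
  have b: "Wf K c (Suc d) (u-1) = (-1)^(Suc d) * binom_int (int (Suc c) - u) (int (Suc d)) +
     (\<Sum>j\<in>{0..d}. (-1)^(d-j) * Pb K c (Suc j) * binom_int (int (Suc c) + int K * int (Suc j) - u) (int (d-j)))"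
    unfolding Wf_def sum.atLeast0_atMost_Suc_shift by (simp add: algebra_simps)
  have c: "Wf K (c+K+1) d u = 
     (\<Sum>j\<in>{0..d}. (-1)^(d-j) * Pb K (c+K+1) j * binom_int (int (Suc c) + int K * int (Suc j) - u) (int (d-j)))"
    unfolding Wf_def by (simp add: algebra_simps)
  show ?thesis unfolding a b c by (simp add: algebra_simps sum.distrib)
qed

lemma Wf_zero: "Wf K 0 (Suc d) u = (-1)^(Suc d) * binom_int (- u) (int (Suc d)) + Wf K K d u"
proof -
  have a: "Wf K 0 (Suc d) u = (-1)^(Suc d) * binom_int (- u) (int (Suc d)) +
     (\<Sum>j\<in>{0..d}. (-1)^(d-j) * Pb K K j * binom_int (int K * int (Suc j) - u) (int (d-j)))"
    unfolding Wf_def sum.atLeast0_atMost_Suc_shift by (simp add: Pb_zero)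
  have c: "Wf K K d u = 
     (\<Sum>j\<in>{0..d}. (-1)^(d-j) * Pb K K j * binom_int (int K * int (Suc j) - u) (int (d-j)))"
    unfolding Wf_def by (simp add: algebra_simps)
  show ?thesis unfolding a c ..
qed

definition g :: "nat \<Rightarrow> nat \<Rightarrow> real" where
  "g d s = (if s = 0 then 1 else (-1)^d * real ((s-1) choose d))"

lemma g1: "g (Suc d) (Suc s) + g d s = g (Suc d) s"
  by (cases s) (auto simp: g_def algebra_simps)

lemma g2: "(-1)^(Suc d) * real (s choose Suc d) + g d s = g (Suc d) s"
  by (cases s) (auto simp: g_def algebra_simps)

lemma Wf_ident: "Wf K c d (- int s) = g d s"
proof (induction d arbitrary: c s)
  case 0
  then show ?case by (simp add: Wf_d0 g_def)
next
  case (Suc d)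
  note outer = Suc.IH
  show ?case
  proof (induction c arbitrary: s)
    case 0
    have e: "nat (1 + int d) = Suc d" by simp
    have "Wf K 0 (Suc d) (- int s) = (-1)^(Suc d) * real (s choose Suc d) + g d s"
      using e Wf_zero[of K d "- int s"] Suc.IH[of K s] by (simp add: binom_int_def nat_int_add)
    then show ?case using g2 by simp
  next
    case (Suc c)
    have "Wf K (Suc c) (Suc d) (- int s) = Wf K c (Suc d) (- int (Suc s)) + Wf K (c+K+1) d (- int s)"
    proof -
      have e: "- int s - 1 = - int (Suc s)" by simp
      show ?thesis using Wf_rec[of K c d "- int s"] unfolding e .
    qed
    also have "\<dots> = g (Suc d) (Suc s) + g d s"
    proof -
      have h1: "Wf K c (Suc d) (- int (Suc s)) = g (Suc d) (Suc s)" by (rule Suc.IH)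
      have h2: "Wf K (c+K+1) d (- int s) = g d s" by (rule outer)
      show ?thesis unfolding h1 h2 ..
    qed
    finally show ?case using g1 by simp
  qed
qed

lemma Wf_u0: "Wf K c d 0 = 1"
  using Wf_ident[of K c d 0] by (simp add: g_def)




lemma lp_points_ne: "lp_points p ss \<noteq> []"
  by (induction p ss rule: lp_points.induct) auto

lemma lp_last_ge: "last (lp_points (a,b) ss) = (x,y) \<Longrightarrow> a \<le> x \<and> b \<le> y"
proof (induction ss arbitrary: a b)
  case Nil
  then show ?case by simp
next
  case (Cons s ss)
  then show ?case
    by (cases s) (fastforce simp: lp_points_ne)+
qed

lemma valid_iff: "k \<ge> 1 \<Longrightarrow> (real_of_int y \<ge> real_of_int x / real_of_int k - real_of_int r) \<longleftrightarrow> x \<le> k*(y+r)"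
proof -
  assume k: "k \<ge> 1"
  then have kp: "real_of_int k > 0" by simp
  have "(real_of_int y \<ge> real_of_int x / real_of_int k - real_of_int r) \<longleftrightarrow> real_of_int x / real_of_int k \<le> real_of_int (y + r)" by (simp; linarith)
  also have "\<dots> \<longleftrightarrow> real_of_int x \<le> real_of_int (y+r) * real_of_int k" using kp by (simp add: divide_le_eq)
  also have "\<dots> \<longleftrightarrow> x \<le> k*(y+r)" by (metis mult.commute of_int_le_iff of_int_mult)
  finally show ?thesis .
qed

lemma Lp_empty: "a > m \<or> b > n \<Longrightarrow> lattice_paths_above k r a b m n = {}"
  unfolding lattice_paths_above_def using lp_last_ge by fastforce

lemma Lp_invalid: "\<not> (real_of_int b \<ge> real_of_int a / real_of_int k - real_of_int r) \<Longrightarrow> lattice_paths_above k r a b m n = {}"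
  unfolding lattice_paths_above_def
  by (auto, case_tac x, auto)

lemma Lp_rec: "real_of_int b \<ge> real_of_int a / real_of_int k - real_of_int r \<Longrightarrow>
  lattice_paths_above k r a b m n = {ss. ss = [] \<and> (a,b) = (m,n)} \<union> Cons True ` lattice_paths_above k r (a+1) b m n
     \<union> Cons False ` lattice_paths_above k r a (b+1) m n"
proof (rule set_eqI)
  fix ss
  assume v: "real_of_int b \<ge> real_of_int a / real_of_int k - real_of_int r"
  show "ss \<in> lattice_paths_above k r a b m n \<longleftrightarrow> ss \<in> {ss. ss = [] \<and> (a,b) = (m,n)} \<union> Cons True ` lattice_paths_above k r (a+1) b m n
     \<union> Cons False ` lattice_paths_above k r a (b+1) m n"
  proof (cases ss)
    case Nil
    then show ?thesis using v by (auto simp: lattice_paths_above_def)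
  next
    case (Cons s ss')
    then show ?thesis using v by (cases s) (auto simp: lattice_paths_above_def lp_points_ne)
  qed
qed

lemma card_two: "finite A \<Longrightarrow> finite B \<Longrightarrow> card (Cons True ` A \<union> Cons False ` B) = card A + card B"
  by (subst card_Un_disjoint) (auto simp: card_image)




lemma count:
  fixes K :: nat and r m n :: int
  assumes K: "K \<ge> 1" and en: "m \<le> int K * (n + r)"
  shows "a \<le> m \<Longrightarrow> b \<le> n \<Longrightarrow> a \<le> int K * (b + r) \<Longrightarrow>
    finite (lattice_paths_above (int K) r a b m n) \<and>
    real (card (lattice_paths_above (int K) r a b m n)) = Wf K (nat (int K*(b+r)-a)) (nat (n-b)) (m-a)"
proof (induction "nat ((m-a)+(n-b))" arbitrary: a b rule: less_induct)
  case less
  define Lp where "Lp = (\<lambda>a b. lattice_paths_above (int K) r a b m n)"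
  have vi: "\<And>x y. (real_of_int y \<ge> real_of_int x / real_of_int (int K) - real_of_int r) \<longleftrightarrow> x \<le> int K*(y+r)"
  proof -
    fix x y
    have kk: "int K \<ge> 1" using K by simp
    show "(real_of_int y \<ge> real_of_int x / real_of_int (int K) - real_of_int r) \<longleftrightarrow> x \<le> int K*(y+r)"
      by (rule valid_iff[OF kk])
  qed
  have rec: "Lp a b = {ss. ss=[] \<and> (a,b)=(m,n)} \<union> Cons True ` Lp (a+1) b \<union> Cons False ` Lp a (b+1)"
    unfolding Lp_def by (rule Lp_rec) (use vi less.prems in blast)
  show ?case
  proof (cases "a = m")
    case am: True
    have e1: "Lp (a+1) b = {}" unfolding Lp_def by (rule Lp_empty) (simp add: am)
    show ?thesis
    proof (cases "b = n")
      case True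
      have e2: "Lp a (b+1) = {}" unfolding Lp_def by (rule Lp_empty) (simp add: True)
      have "Lp a b = {[]}" using rec e1 e2 am True by auto
      moreover have "Wf K (nat (int K*(b+r)-a)) (nat (n-b)) (m-a) = 1"
        using Wf_d0[of "m-a" "nat (int K*(b+r)-a)" K] less.prems True am by simp
      ultimately show ?thesis unfolding Lp_def by simp
    next
      case False
      have IH: "finite (Lp a (b+1)) \<and> real (card (Lp a (b+1))) = Wf K (nat (int K*(b+1+r)-a)) (nat (n-(b+1))) (m-a)"
        unfolding Lp_def
        by (rule less.hyps) (use less.prems False am K in \<open>auto simp: algebra_simps\<close>)
      have "Lp a b = Cons False ` Lp a (b+1)" using rec e1 am False by auto
      then have "finite (Lp a b) \<and> real (card (Lp a b)) = 1"
        using IH Wf_u0[of K] am by (simp add: card_image)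
      moreover have "Wf K (nat (int K*(b+r)-a)) (nat (n-b)) (m-a) = 1"
        using Wf_u0[of K] am by simp
      ultimately show ?thesis unfolding Lp_def by simp
    qed
  next
    case am: False
    show ?thesis
    proof (cases "b = n")
      case True
      have e2: "Lp a (b+1) = {}" unfolding Lp_def by (rule Lp_empty) (simp add: True)
      have IH: "finite (Lp (a+1) b) \<and> real (card (Lp (a+1) b)) = Wf K (nat (int K*(b+r)-(a+1))) (nat (n-b)) (m-(a+1))"
        unfolding Lp_def
        by (rule less.hyps) (use less.prems True am K en in \<open>auto simp: algebra_simps\<close>)
      have w1: "Wf K (nat (int K*(b+r)-(a+1))) (nat (n-b)) (m-(a+1)) = 1"
        using Wf_d0[of "m-(a+1)" "nat (int K*(b+r)-(a+1))" K] True en by simp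
      have "Lp a b = Cons True ` Lp (a+1) b" using rec e2 am True by auto
      then have "finite (Lp a b) \<and> real (card (Lp a b)) = 1"
        using IH w1 by (simp add: card_image)
      moreover have "Wf K (nat (int K*(b+r)-a)) (nat (n-b)) (m-a) = 1"
        using Wf_d0[of "m-a" "nat (int K*(b+r)-a)" K] True en by simp
      ultimately show ?thesis unfolding Lp_def by simp
    next
      case bn: False
      have IH2: "finite (Lp a (b+1)) \<and> real (card (Lp a (b+1))) = Wf K (nat (int K*(b+1+r)-a)) (nat (n-(b+1))) (m-a)"
        unfolding Lp_def
        by (rule less.hyps) (use less.prems bn am K in \<open>auto simp: algebra_simps\<close>)
      obtain d' where d': "nat (n-b) = Suc d'" "nat (n-(b+1)) = d'"
        using less.prems bn by (intro that[of "nat (n-(b+1))"]) auto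
      show ?thesis
      proof (cases "a + 1 \<le> int K * (b + r)")
        case True
        have IH1: "finite (Lp (a+1) b) \<and> real (card (Lp (a+1) b)) = Wf K (nat (int K*(b+r)-(a+1))) (nat (n-b)) (m-(a+1))"
          unfolding Lp_def
          by (rule less.hyps) (use less.prems True am K en in \<open>auto simp: algebra_simps\<close>)
        define c' where "c' = nat (int K*(b+r)-(a+1))"
        have c1: "nat (int K*(b+r)-a) = Suc c'" using True by (simp add: c'_def)
        have c2: "nat (int K*(b+1+r)-a) = c'+K+1" using True by (simp add: c'_def algebra_simps)
        have "Lp a b = Cons True ` Lp (a+1) b \<union> Cons False ` Lp a (b+1)" using rec am by auto
        note eq = this
        have fin: "finite (Lp a b)" using eq IH1 IH2 by simp
        have "real (card (Lp a b)) = real (card (Lp (a+1) b)) + real (card (Lp a (b+1)))"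
          using eq IH1 IH2 card_two by simp
        also have "\<dots> = Wf K c' (Suc d') (m-a-1) + Wf K (c'+K+1) d' (m-a)"
          using IH1 IH2 c2 d' by (simp add: c'_def algebra_simps)
        also have "\<dots> = Wf K (nat (int K*(b+r)-a)) (nat (n-b)) (m-a)"
          unfolding c1 d' by (rule Wf_rec[symmetric])
        finally show ?thesis using fin unfolding Lp_def by simp
      next
        case False
        have e1: "Lp (a+1) b = {}" unfolding Lp_def by (rule Lp_invalid) (unfold vi, use False in simp)
        have c0: "nat (int K*(b+r)-a) = 0" using False less.prems by simp
        have c2: "nat (int K*(b+1+r)-a) = K" using False less.prems by (simp add: algebra_simps)
        have "Lp a b = Cons False ` Lp a (b+1)" using rec e1 am by auto
        note eq = this
        have fin: "finite (Lp a b)" using eq IH2 by simp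
        have "real (card (Lp a b)) = real (card (Lp a (b+1)))"
          using eq IH2 by (simp add: card_image)
        also have "\<dots> = Wf K K d' (m-a)" using IH2 c2 d' by simp
        also have "\<dots> = Wf K 0 (Suc d') (m-a)"
          using Wf_zero[of K d' "m-a"] am less.prems by (simp add: binom_int_def)
        finally show ?thesis using fin unfolding Lp_def c0 d' by simp
      qed
    qed
  qed
qed




lemma binom_int_nat: "binom_int (int N) (int j) = real (N choose j)"
  by (simp add: binom_int_def)

theorem corollary2p2:
  fixes k r a b m n :: int
  assumes "k \<ge> 1" and "0 \<le> a" and "a \<le> m"
    and "max 0 (real_of_int a / real_of_int k - real_of_int r) \<le> real_of_int b" and "b \<le> n"
    and "real_of_int n \<ge> real_of_int m / real_of_int k - real_of_int r"
  shows "real (card (lattice_paths_above k r a b m n)) =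
    (\<Sum>i \<in> {0..\<lfloor>real_of_int (k * (n + r) - m) / real_of_int (k + 1)\<rfloor>}.
       (-1) ^ nat i * (real_of_int (k * (b + r) - a + 1) / real_of_int (k * (n + r - i) - a + 1))
       * binom_int ((k + 1) * (n - i) - a - b + k * r) (n - b - i)
       * binom_int (k * (n + r - i) - m) i)"
proof -
  define K where "K = nat k"
  have hk: "k = int K" using assms(1) by (simp add: K_def)
  have K1: "K \<ge> 1" using assms(1) by (simp add: K_def)
  have vab: "a \<le> k*(b+r)" using valid_iff[OF assms(1), where x=a and y=b and r=r] assms(4) by simp
  have vmn: "m \<le> k*(n+r)" using valid_iff[OF assms(1), where x=m and y=n and r=r] assms(6) by simp
  define c where "c = nat (k*(b+r)-a)"
  define d where "d = nat (n-b)"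
  define u where "u = m - a"
  have hc: "k*(b+r)-a = int c" using vab by (simp add: c_def)
  have hd: "n - b = int d" using assms(5) by (simp add: d_def)
  have cnt: "real (card (lattice_paths_above k r a b m n)) = Wf K c d u"
    using count[OF K1, of m n r a b] vmn vab assms(3,5) unfolding hk[symmetric] c_def d_def u_def
    by simp
  define T where "T = (\<lambda>i. (-1) ^ nat i * (real_of_int (k * (b + r) - a + 1) / real_of_int (k * (n + r - i) - a + 1))
       * binom_int ((k + 1) * (n - i) - a - b + k * r) (n - b - i)
       * binom_int (k * (n + r - i) - m) i)"
  define F where "F = \<lfloor>real_of_int (k * (n + r) - m) / real_of_int (k + 1)\<rfloor>"
  have zero: "T i = 0" if "0 \<le> i" "i > int d \<or> i > F" for i
  proof (cases "i > int d")
    case True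
    then have "n - b - i < 0" using hd by simp
    then show ?thesis by (simp add: T_def binom_int_def)
  next
    case False
    then have "i > F" using that by simp
    then have "real_of_int (k * (n + r) - m) / real_of_int (k + 1) < real_of_int i"
      unfolding F_def by (simp add: floor_less_iff)
    then have "real_of_int (k * (n + r) - m) < real_of_int i * real_of_int (k + 1)"
      using assms(1) by (simp add: divide_less_eq)
    then have "k * (n + r) - m < i * (k + 1)"
      by (metis of_int_less_iff of_int_mult)
    then have lt: "k * (n + r - i) - m < i" by (simp add: algebra_simps)
    have "binom_int (k * (n + r - i) - m) i = 0"
    proof (cases "0 \<le> k * (n + r - i) - m")
      case True
      then have "nat (k * (n + r - i) - m) < nat i" using lt by simp
      then show ?thesis by (simp add: binom_int_def)
    next
      case False
      then show ?thesis by (simp add: binom_int_def)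
    qed
    then show ?thesis by (simp add: T_def)
  qed
  have s1: "(\<Sum>i\<in>{0..F}. T i) = (\<Sum>i\<in>{0..int d}. T i)"
  proof -
    have "(\<Sum>i\<in>{0..F}. T i) = (\<Sum>i\<in>{0..F} \<union> {0..int d}. T i)"
      by (rule sum.mono_neutral_left) (auto intro: zero)
    also have "\<dots> = (\<Sum>i\<in>{0..int d}. T i)"
      by (rule sum.mono_neutral_right) (auto intro: zero)
    finally show ?thesis .
  qed
  have termeq: "T (int d - int j) = (-1)^(d-j) * Pb K c j * binom_int (int c + int K * int j - u) (int (d-j))"
    if "j \<le> d" for j
  proof -
    define i where "i = int d - int j"
    have hb: "n - i = b + int j" using hd by (simp add: i_def)
    have e1: "k*(b+r)-a+1 = int c + 1" using hc by simp
    have e2: "k*(n+r-i)-a+1 = int c + int K * int j + 1"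
    proof -
      have "k*(n+r-i) = k*(b+r) + k * int j" using hb by (simp add: algebra_simps)
      then show ?thesis using hc hk by simp
    qed
    have e3: "(k+1)*(n-i)-a-b+k*r = int (c + (K+1)*j)"
    proof -
      have "(k+1)*(n-i)-a-b+k*r = (k*(b+r)-a) + (k+1) * int j" unfolding hb by (simp add: algebra_simps)
      moreover have "int (c + (K+1)*j) = (k*(b+r)-a) + (k+1) * int j" using hc hk by (simp add: algebra_simps)
      ultimately show ?thesis by simp
    qed
    have e4: "n-b-i = int j" using hb by simp
    have e5: "k*(n+r-i)-m = int c + int K * int j - u"
    proof -
      have "k*(n+r-i) = k*(b+r) + k * int j" using hb by (simp add: algebra_simps)
      then show ?thesis using hc hk by (simp add: u_def)
    qed
    have e6: "nat i = d - j" using that by (simp add: i_def)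
    have e7: "i = int (d - j)" using that by (simp add: i_def)
    have "T i = (-1)^(d-j) * ((real c + 1) / (real c + real K * real j + 1) * real ((c + (K+1)*j) choose j))
       * binom_int (int c + int K * int j - u) (int (d-j))"
      unfolding T_def e1 e2 e3 e4 e5 e6 binom_int_nat e7[symmetric]
      by simp
    then show ?thesis unfolding i_def Pb_closed by simp
  qed
  have s2: "Wf K c d u = (\<Sum>i\<in>{0..int d}. T i)"
    unfolding Wf_def
  proof (rule sum.reindex_bij_witness[of _ "\<lambda>i. d - nat i" "\<lambda>j. int d - int j"])
    fix j assume "j \<in> {0..d}"
    then show "T (int d - int j) = (-1)^(d-j) * Pb K c j * binom_int (int c + int K * int j - u) (int (d-j))"
      using termeq by simp
  qed auto
  show ?thesis using cnt s1 s2 unfolding T_def F_def by simp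
qed


end
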